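(* Let $\pi\in S_n$. For every $k\in\{1,\dots,n\}$, $(c_k,d_k)\in\beta_\pi$ if and only if $k$ is the largest element of the $\pi$-segment containing $k$.
   Context: $G$ is the direct product of chains $0=c_0\prec\dots\prec c_n$ and $0=d_0\prec\dots\prec d_n$, elements written $c_i\vee d_j$. For $\pi\in S_n$, $\beta_\pi$ is the join, in the lattice of join-congruences (equivalences compatible with $\vee$) of $(G;\vee)$, of the smallest join-congruences collapsing $\{c_{i-1}\vee d_{\pi(i)},c_i\vee d_{\pi(i)-1},c_i\vee d_{\pi(i)}\}$, $i=1,\dots,n$. For $\sigma\in S_n$, a set $I$ is closed if $\sigma(I)\subseteq I$; a nonempty interval $\{u,\dots,v\}$ of $\{1<\dots<n\}$ is a $\sigma$-section if it, $\{1,\dots,u-1\}$ and $\{v+1,\dots,n\}$ are closed; minimal $\sigma$-sections are $\sigma$-segments, and they partition $\{1,\dots,n\}$. *)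

theory Defs
  imports "HOL-Combinatorics.Permutations"
begin

text \<open>The grid G = chain {0..n} x chain {0..n}; the element c_i \<or> d_j is the pair (i,j),
  so c_i = (i,0), d_j = (0,j) and join is componentwise max.\<close>

definition grid :: "nat \<Rightarrow> (nat \<times> nat) set" where
  "grid n = {0..n} \<times> {0..n}"

definition gjoin :: "nat \<times> nat \<Rightarrow> nat \<times> nat \<Rightarrow> nat \<times> nat" where
  "gjoin x y = (max (fst x) (fst y), max (snd x) (snd y))"

definition join_congruence :: "nat \<Rightarrow> (nat \<times> nat) rel \<Rightarrow> bool" where
  "join_congruence n \<theta> \<longleftrightarrow> equiv (grid n) \<theta> \<and>
     (\<forall>x y z. (x, y) \<in> \<theta> \<longrightarrow> z \<in> grid n \<longrightarrow> (gjoin x z, gjoin y z) \<in> \<theta>)"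

definition triple :: "(nat \<Rightarrow> nat) \<Rightarrow> nat \<Rightarrow> (nat \<times> nat) set" where
  "triple \<pi> i = {(i - 1, \<pi> i), (i, \<pi> i - 1), (i, \<pi> i)}"

text \<open>beta_pi: the join of the smallest join-congruences collapsing each triple, i.e. the
  smallest join-congruence collapsing all triples (intersection of all such).\<close>
definition beta :: "nat \<Rightarrow> (nat \<Rightarrow> nat) \<Rightarrow> (nat \<times> nat) rel" where
  "beta n \<pi> = \<Inter> {\<theta>. join_congruence n \<theta> \<and>
                       (\<forall>i\<in>{1..n}. triple \<pi> i \<times> triple \<pi> i \<subseteq> \<theta>)}"

definition closed_set :: "(nat \<Rightarrow> nat) \<Rightarrow> nat set \<Rightarrow> bool" where
  "closed_set \<sigma> I \<longleftrightarrow> \<sigma> ` I \<subseteq> I"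

definition sigma_section :: "nat \<Rightarrow> (nat \<Rightarrow> nat) \<Rightarrow> nat set \<Rightarrow> bool" where
  "sigma_section n \<sigma> S \<longleftrightarrow> (\<exists>u v. 1 \<le> u \<and> u \<le> v \<and> v \<le> n \<and> S = {u..v} \<and>
       closed_set \<sigma> {u..v} \<and> closed_set \<sigma> {1..<u} \<and> closed_set \<sigma> {v+1..n})"

definition segment :: "nat \<Rightarrow> (nat \<Rightarrow> nat) \<Rightarrow> nat set \<Rightarrow> bool" where
  "segment n \<sigma> S \<longleftrightarrow> sigma_section n \<sigma> S \<and> (\<forall>T. sigma_section n \<sigma> T \<and> T \<subseteq> S \<longrightarrow> T = S)"

end

theory Submission
  imports Defs
begin

lemma perm_closed_compl:
  assumes "\<pi> permutes {1..n}" "\<pi>`{1..m} \<subseteq> {1..m}" "x \<notin> {1..m}"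
  shows "\<pi> x \<notin> {1..m::nat}"
proof
  assume a: "\<pi> x \<in> {1..m}"
  have inj: "inj \<pi>" using assms(1) permutes_inj by blast
  have "\<pi>`{1..m} = {1..m}"
    by (rule endo_inj_surj[OF _ assms(2) inj_on_subset[OF inj subset_UNIV]]) simp
  then have "\<pi> x \<in> \<pi> ` {1..m}" using a by simp
  then obtain y where y: "y \<in> {1..m}" "\<pi> x = \<pi> y" by (rule imageE)
  have "x = y" using injD[OF inj y(2)] .
  then show False using y(1) assms(3) by simp
qed

lemma rhs_iff:
  assumes p: "\<pi> permutes {1..n}" and k: "k \<in> {1..n}"
  shows "(\<exists>S. segment n \<pi> S \<and> k \<in> S \<and> k = Max S) \<longleftrightarrow> \<pi>`{1..k} \<subseteq> {1..k}"
proof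
  assume "\<exists>S. segment n \<pi> S \<and> k \<in> S \<and> k = Max S"
  then obtain u v where uv: "1 \<le> u" "u \<le> v" "v \<le> n" "k \<in> {u..v}" "k = Max {u..v}"
    "closed_set \<pi> {u..v}" "closed_set \<pi> {1..<u}"
    unfolding segment_def sigma_section_def by blast
  have "Max {u..v} = v" using uv(2) by (intro Max_eqI) auto
  then have "k = v" using uv by simp
  have "{1..k} = {1..<u} \<union> {u..v}" using uv \<open>k = v\<close> by auto
  then show "\<pi>`{1..k} \<subseteq> {1..k}" using uv unfolding closed_set_def by auto
next
  assume C: "\<pi>`{1..k} \<subseteq> {1..k}"
  define M where "M = {m. m < k \<and> \<pi>`{1..m} \<subseteq> {1..m}}"
  have fin: "finite M" unfolding M_def by auto
  have "0 \<in> M" using k unfolding M_def by auto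
  define w where "w = Max M"
  have wM: "w \<in> M" using fin \<open>0 \<in> M\<close> unfolding w_def by (metis Max_in empty_iff)
  have wmax: "\<And>m. m \<in> M \<Longrightarrow> m \<le> w" using fin unfolding w_def by auto
  have wk: "w < k" and Cw: "\<pi>`{1..w} \<subseteq> {1..w}" using wM unfolding M_def by auto
  have gen: "closed_set \<pi> {a+1..b}" if "\<pi>`{1..a} \<subseteq> {1..a}" "\<pi>`{1..b} \<subseteq> {1..b}" for a b
    unfolding closed_set_def
  proof
    fix y assume "y \<in> \<pi>`{a+1..b}"
    then obtain x where x: "x \<in> {a+1..b}" "y = \<pi> x" by auto
    have "x \<notin> {1..a}" using x by auto
    then have "\<pi> x \<notin> {1..a}" using perm_closed_compl[OF p that(1)] by blast
    moreover have "x \<in> {1..b}" using x by auto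
    then have "\<pi> x \<in> {1..b}" by (rule subsetD[OF that(2) imageI])
    ultimately show "y \<in> {a+1..b}" using x by auto
  qed
  have Cn: "\<pi>`{1..n} \<subseteq> {1..n}" using p permutes_image by blast
  define S where "S = {w+1..k}"
  have sec: "sigma_section n \<pi> S"
    unfolding sigma_section_def S_def
  proof (intro exI conjI)
    show "1 \<le> w + 1" by simp
    show "w + 1 \<le> k" using wk by simp
    show "k \<le> n" using k by simp
    show "closed_set \<pi> {w + 1..k}" using gen[OF Cw C] .
    have "{1..<w+1} = {1..w}" by auto
    then show "closed_set \<pi> {1..<w + 1}" using Cw unfolding closed_set_def by simp
    show "closed_set \<pi> {k + 1..n}" using gen[OF C Cn] .
  qed simp
  have "segment n \<pi> S"
    unfolding segment_def
  proof (intro conjI allI impI sec)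
    fix T assume T: "sigma_section n \<pi> T \<and> T \<subseteq> S"
    then obtain u v where uv: "1 \<le> u" "u \<le> v" "v \<le> n" "T = {u..v}"
      "closed_set \<pi> {u..v}" "closed_set \<pi> {1..<u}"
      unfolding sigma_section_def by blast
    have sub: "{u..v} \<subseteq> {w+1..k}" using T uv S_def by simp
    then have uw: "w + 1 \<le> u" and vk: "v \<le> k" using uv by auto
    have "{1..<u} = {1..u-1}" using uv by auto
    then have Cu: "\<pi>`{1..u-1} \<subseteq> {1..u-1}" using uv unfolding closed_set_def by simp
    have "u - 1 \<in> M" using Cu uv vk unfolding M_def by auto
    then have "u - 1 \<le> w" using wmax by blast
    then have u: "u = w + 1" using uw by simp
    have "{1..v} = {1..<u} \<union> {u..v}" using uv by auto
    then have Cv: "\<pi>`{1..v} \<subseteq> {1..v}" using uv unfolding closed_set_def by auto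
    have "v = k"
    proof (rule ccontr)
      assume "v \<noteq> k"
      then have "v \<in> M" using vk Cv unfolding M_def by auto
      then have "v \<le> w" using wmax by blast
      then show False using u uv by simp
    qed
    then show "T = S" using u uv S_def by simp
  qed
  moreover have "k \<in> S" using wk S_def by auto
  moreover have "k = Max S" unfolding S_def using wk by (intro Max_eqI[symmetric]) auto
  ultimately show "\<exists>S. segment n \<pi> S \<and> k \<in> S \<and> k = Max S" by blast
qed

lemma beta_if:
  assumes p: "\<pi> permutes {1..n}" and k: "k \<in> {1..n}" and C: "\<pi>`{1..k} \<subseteq> {1..k}"
  shows "((k, 0), (0, k)) \<in> beta n \<pi>"
  unfolding beta_def
proof (rule InterI, clarify)
  fix \<theta> assume jc: "join_congruence n \<theta>"
    and tr: "\<forall>i\<in>{1..n}. triple \<pi> i \<times> triple \<pi> i \<subseteq> \<theta>"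
  have eq: "equiv (grid n) \<theta>" and comp: "\<And>x y z. (x, y) \<in> \<theta> \<Longrightarrow> z \<in> grid n \<Longrightarrow> (gjoin x z, gjoin y z) \<in> \<theta>"
  proof -
    have jc': "equiv (grid n) \<theta> \<and>
     (\<forall>x y z. (x, y) \<in> \<theta> \<longrightarrow> z \<in> grid n \<longrightarrow> (gjoin x z, gjoin y z) \<in> \<theta>)"
      using jc unfolding join_congruence_def .
    show "equiv (grid n) \<theta>" using conjunct1[OF jc'] .
    fix x y z assume "(x, y) \<in> \<theta>" "z \<in> grid n"
    then show "(gjoin x z, gjoin y z) \<in> \<theta>" using conjunct2[OF jc'] by blast
  qed
  have tr0: "trans \<theta>" and sy0: "sym \<theta>" and rf0: "refl_on (grid n) \<theta>"
    using eq by (simp_all add: equiv_def)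
  have trans: "\<And>x y z. (x,y) \<in> \<theta> \<Longrightarrow> (y,z) \<in> \<theta> \<Longrightarrow> (x,z) \<in> \<theta>"
    using tr0 by (rule transD)
  have sym: "\<And>x y. (x,y) \<in> \<theta> \<Longrightarrow> (y,x) \<in> \<theta>"
    using sy0 by (rule symD)
  have refl: "\<And>x. x \<in> grid n \<Longrightarrow> (x,x) \<in> \<theta>"
    using rf0 by (rule refl_onD)
  have img: "\<And>i. i \<in> {1..n} \<Longrightarrow> \<pi> i \<in> {1..n}" by (simp only: permutes_in_image[OF p])
  have step1: "((i-1, y), (i, y)) \<in> \<theta>" if "i \<in> {1..n}" "\<pi> i \<le> y" "y \<le> n" for i y
  proof -
    have "triple \<pi> i \<times> triple \<pi> i \<subseteq> \<theta>" using tr that(1) by blast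
    moreover have "((i-1, \<pi> i), (i, \<pi> i)) \<in> triple \<pi> i \<times> triple \<pi> i" by (simp add: triple_def)
    ultimately have "((i-1, \<pi> i), (i, \<pi> i)) \<in> \<theta>" by (rule subsetD)
    from comp[OF this, of "(0,y)"] show ?thesis using that by (simp add: grid_def gjoin_def max_absorb2)
  qed
  have step2: "((x, \<pi> i - 1), (x, \<pi> i)) \<in> \<theta>" if "i \<in> {1..n}" "i \<le> x" "x \<le> n" for i x
  proof -
    have "triple \<pi> i \<times> triple \<pi> i \<subseteq> \<theta>" using tr that(1) by blast
    moreover have "((i, \<pi> i - 1), (i, \<pi> i)) \<in> triple \<pi> i \<times> triple \<pi> i" by (simp add: triple_def)
    ultimately have "((i, \<pi> i - 1), (i, \<pi> i)) \<in> \<theta>" by (rule subsetD)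
    from comp[OF this, of "(x,0)"] show ?thesis using that by (simp add: grid_def gjoin_def max_absorb2)
  qed
  have A: "j \<le> k \<Longrightarrow> ((0,k),(j,k)) \<in> \<theta>" for j
  proof (induction j)
    case 0 then show ?case using k by (intro refl) (simp add: grid_def)
  next
    case (Suc j)
    have "Suc j \<in> {1..k}" using Suc.prems by auto
    then have "\<pi> (Suc j) \<in> {1..k}" by (rule subsetD[OF C imageI])
    then have "\<pi> (Suc j) \<le> k" by simp
    then have "((j, k), (Suc j, k)) \<in> \<theta>" using step1[of "Suc j" k] Suc.prems k by simp
    moreover have "((0,k),(j,k)) \<in> \<theta>" using Suc.IH Suc.prems by simp
    ultimately show ?case by (rule trans[rotated])
  qed
  have surj: "\<pi>`{1..k} = {1..k}"
    by (rule endo_inj_surj[OF _ C inj_on_subset[OF permutes_inj[OF p] subset_UNIV]]) simp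
  have B: "j \<le> k \<Longrightarrow> ((k,0),(k,j)) \<in> \<theta>" for j
  proof (induction j)
    case 0 then show ?case using k by (intro refl) (simp add: grid_def)
  next
    case (Suc j)
    have "Suc j \<in> \<pi>`{1..k}" using surj Suc.prems by auto
    then obtain i where i: "i \<in> {1..k}" "\<pi> i = Suc j" by auto
    then have "((k, j), (k, Suc j)) \<in> \<theta>" using step2[of i k] k by simp
    moreover have "((k,0),(k,j)) \<in> \<theta>" using Suc.IH Suc.prems by simp
    ultimately show ?case by (rule trans[rotated])
  qed
  show "((k, 0), 0, k) \<in> \<theta>" using trans[OF B[of k] sym[OF A[of k]]] by simp
qed

lemma beta_only_if:
  assumes p: "\<pi> permutes {1..n}" and k: "k \<in> {1..n}" and mem: "((k, 0), (0, k)) \<in> beta n \<pi>"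
  shows "\<pi>`{1..k} \<subseteq> {1..k}"
proof (rule ccontr)
  assume nC: "\<not> \<pi>`{1..k} \<subseteq> {1..k}"
  have inj: "inj \<pi>" using p permutes_inj by blast
  obtain j where j: "j \<notin> {1..k}" "\<pi> j \<in> {1..k}"
  proof -
    have "\<exists>j. j \<notin> {1..k} \<and> \<pi> j \<in> {1..k}"
    proof (rule ccontr)
      assume H: "\<not> ?thesis"
      have pi': "inv \<pi> permutes {1..n}" using p permutes_inv by blast
      have "inv \<pi> ` {1..k} \<subseteq> {1..k}"
      proof
        fix y assume "y \<in> inv \<pi> ` {1..k}"
        then obtain z where z: "z \<in> {1..k}" "y = inv \<pi> z" by auto
        have "\<pi> y = z" using z permutes_inverses(1)[OF p] by simp
        then show "y \<in> {1..k}" using H z(1) by metis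
      qed
      moreover obtain i where i: "i \<in> {1..k}" "\<pi> i \<notin> {1..k}" using nC by blast
      ultimately have "inv \<pi> (\<pi> i) \<notin> {1..k}" using perm_closed_compl[OF pi'] by blast
      then show False using i permutes_inverses(2)[OF p] by simp
    qed
    then show ?thesis using that by blast
  qed
  have jn: "j \<in> {1..n}"
  proof (rule ccontr)
    assume "j \<notin> {1..n}"
    then have "\<pi> j = j" using p permutes_not_in by fastforce
    then show False using j k by auto
  qed
  have jk: "k < j" using j jn by auto
  define P where "P = (\<lambda>x::nat\<times>nat. fst x \<le> j - 1 \<and> snd x \<le> \<pi> j - 1)"
  define \<theta> where "\<theta> = {(x,y). x \<in> grid n \<and> y \<in> grid n \<and> (P x \<longleftrightarrow> P y)}"
  have img: "\<And>i. i \<in> {1..n} \<Longrightarrow> \<pi> i \<in> {1..n}" by (simp only: permutes_in_image[OF p])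
  have "join_congruence n \<theta>"
    unfolding join_congruence_def
  proof (intro conjI allI impI)
    show "equiv (grid n) \<theta>"
      by (rule equivI) (auto simp: \<theta>_def refl_on_def sym_def trans_def)
    fix x y z assume "(x,y) \<in> \<theta>" "z \<in> grid n"
    then show "(gjoin x z, gjoin y z) \<in> \<theta>"
      by (auto simp: \<theta>_def grid_def gjoin_def P_def)
  qed
  moreover have "\<forall>i\<in>{1..n}. triple \<pi> i \<times> triple \<pi> i \<subseteq> \<theta>"
  proof
    fix i assume i: "i \<in> {1..n}"
    have pii: "\<pi> i \<in> {1..n}" using img i by blast
    have g: "triple \<pi> i \<subseteq> grid n" using i pii by (auto simp: triple_def grid_def)
    have ij: "\<pi> i = \<pi> j \<Longrightarrow> i = j" using inj by (meson injD)
    have "\<forall>x\<in>triple \<pi> i. P x \<longleftrightarrow> P (i, \<pi> i)"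
    proof (cases "i = j")
      case True then show ?thesis using i pii jn j by (auto simp: triple_def P_def)
    next
      case False
      then have "\<pi> i \<noteq> \<pi> j" using ij by blast
      then show ?thesis using False i pii jn j by (auto simp: triple_def P_def)
    qed
    then show "triple \<pi> i \<times> triple \<pi> i \<subseteq> \<theta>" using g by (auto simp: \<theta>_def)
  qed
  ultimately have "beta n \<pi> \<subseteq> \<theta>" unfolding beta_def by blast
  then have "((k, 0), (0, k)) \<in> \<theta>" using mem by blast
  then show False using jk j by (auto simp: \<theta>_def P_def)
qed

theorem lemma4p3:
  fixes n :: nat and \<pi> :: "nat \<Rightarrow> nat" and k :: nat
  assumes "\<pi> permutes {1..n}"
    and "k \<in> {1..n}"
  shows "((k, 0), (0, k)) \<in> beta n \<pi> \<longleftrightarrow>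
         (\<exists>S. segment n \<pi> S \<and> k \<in> S \<and> k = Max S)"
  using rhs_iff[OF assms] beta_if[OF assms] beta_only_if[OF assms] by blast

end
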